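(* Consider the following discrete-time process on three times $r=0<s<t$. The environment at time $r=0$ is in a correlated bipartite state $\eta_{\mathcal{E}_s\mathcal{E}_t}$ (with two parts, one labelled by each later time step), and the system is initially uncorrelated with the environment. Between times $r$ and $s$ the system interacts only with environment part $\mathcal{E}_s$ via the swap unitary $\mathbf{S}_{\mathcal{S}\mathcal{E}_s}$ (where $\mathbf{S}\ket{ij}=\ket{ji}$), and between times $s$ and $t$ the system interacts only with environment part $\mathcal{E}_t$ via the swap unitary $\mathbf{S}_{\mathcal{S}\mathcal{E}_t}$; each environment part is discarded after its interaction. Then the process is operationally CP-divisible, i.e. $\Lambda_{t:r}=\Lambda_{t:s}\circ\Lambda_{s:r}$, where each $\Lambda_{y:x}$ is the experimentally reconstructed map obtained by preparing a fresh system state at $x$ (after discarding the system there) and measuring at $y$. Nonetheless the process is non-Markovian: if the experimenter stores the system state at time $s_{-}$, inserts a fresh (independent) system state at $s_{+}$, lets the dynamics continue to $t$ and stores that output too, the resulting joint state $\rho_{st}$ is exactly the correlated initial environment state $\eta_{\mathcal{E}_s\mathcal{E}_t}$, so it is correlated even though the states inserted at times $r$ and $s_{+}$ were independent.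
   Context: Setting: a finite-dimensional quantum system coupled to an environment, with system–environment unitary dynamics between times. Operational CP (oCP) divisibility: for any $t>s>r$, $\Lambda_{t:r}=\Lambda_{t:s}\circ\Lambda_{s:r}$, where $\Lambda_{t:s}[\rho_s]=\operatorname{tr}_\mathcal{E}[\mathcal{U}_{t:s}(\rho_s\otimes\eta_s)]$ is reconstructed by discarding the system at $s_{-}$, preparing a fresh state $\rho_s$ at $s_{+}$, and measuring at $t$; $\eta_s$ is the reduced environment state at $s$. A process is Markovian iff its process tensor has product form $T=L_{t:s}\otimes L_{s:r}$ (Choi states of the intermediate maps); any correlation between outputs produced from independent inputs signals memory. *)

theory Defs
  imports Complex_Main
begin

text \<open>Finite-dimensional operators on a finite index type 'i, represented by
their matrix entries in the computational basis.\<close>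
type_synonym 'i op = "'i \<Rightarrow> 'i \<Rightarrow> complex"

definition tr :: "('i::finite) op \<Rightarrow> complex" where
  "tr A = (\<Sum>i\<in>UNIV. A i i)"

definition positive_op :: "('i::finite) op \<Rightarrow> bool" where
  "positive_op A \<longleftrightarrow> (\<forall>v::'i \<Rightarrow> complex.
     let q = (\<Sum>i\<in>UNIV. \<Sum>j\<in>UNIV. cnj (v i) * A i j * v j) in Im q = 0 \<and> Re q \<ge> 0)"

definition density :: "('i::finite) op \<Rightarrow> bool" where
  "density A \<longleftrightarrow> positive_op A \<and> tr A = 1"

definition idm :: "'i op" where
  "idm i j = (if i = j then 1 else 0)"

definition tensor :: "'a op \<Rightarrow> 'b op \<Rightarrow> ('a \<times> 'b) op" where
  "tensor A B = (\<lambda>(a, b) (a', b'). A a a' * B b b')"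

definition ptrace2 :: "('a \<times> 'b::finite) op \<Rightarrow> 'a op" where
  "ptrace2 C = (\<lambda>a a'. \<Sum>b\<in>UNIV. C (a, b) (a', b))"

definition ptrace1 :: "('a::finite \<times> 'b) op \<Rightarrow> 'b op" where
  "ptrace1 C = (\<lambda>b b'. \<Sum>a\<in>UNIV. C (a, b) (a, b'))"

definition conjU :: "('i::finite) op \<Rightarrow> 'i op \<Rightarrow> 'i op" where
  "conjU U C = (\<lambda>x y. \<Sum>a\<in>UNIV. \<Sum>b\<in>UNIV. U x a * C a b * cnj (U y b))"

definition swapU :: "('d \<times> 'd) op" where
  "swapU = (\<lambda>(i, j) (k, l). if i = l \<and> j = k then 1 else 0)"

text \<open>Joint space ordering S x (E_s x E_t).  Swap of S with E_s, identity on E_t.\<close>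
definition U1 :: "('d \<times> ('d \<times> 'd)) op" where
  "U1 = (\<lambda>(s, es, et) (s', es', et'). swapU (s, es) (s', es') * idm et et')"

text \<open>State of S x E_t at time s_- (after the first swap, E_s discarded),
  for initial system state rho and initial environment state eta on E_s x E_t.\<close>
definition state_s :: "('d::finite) op \<Rightarrow> ('d \<times> 'd) op \<Rightarrow> ('d \<times> 'd) op" where
  "state_s rho eta =
     (let X = conjU U1 (tensor rho eta)
      in (\<lambda>(s, et) (s', et'). \<Sum>es\<in>UNIV. X (s, es, et) (s', es, et')))"

definition Lam_sr :: "('d::finite \<times> 'd) op \<Rightarrow> 'd op \<Rightarrow> 'd op" where
  "Lam_sr eta rho = ptrace2 (state_s rho eta)"

definition Lam_tr :: "('d::finite \<times> 'd) op \<Rightarrow> 'd op \<Rightarrow> 'd op" where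
  "Lam_tr eta rho = ptrace2 (conjU swapU (state_s rho eta))"

text \<open>reduced environment state eta_s at time s (actual process with initial system state rho0)\<close>
definition eta_s :: "('d::finite \<times> 'd) op \<Rightarrow> 'd op \<Rightarrow> 'd op" where
  "eta_s eta rho0 = ptrace1 (state_s rho0 eta)"

definition Lam_ts :: "('d::finite \<times> 'd) op \<Rightarrow> 'd op \<Rightarrow> 'd op \<Rightarrow> 'd op" where
  "Lam_ts eta rho0 sigma = ptrace2 (conjU swapU (tensor sigma (eta_s eta rho0)))"

text \<open>Joint output rho_st: the system at s_- is stored in a memory M, a fresh state
  sigma is inserted at s_+, the second swap (S with E_t) acts, E_t is discarded.
  Ordering of the joint space: M x (S x E_t); result on M x S.\<close>
definition rho_st :: "('d::finite \<times> 'd) op \<Rightarrow> 'd op \<Rightarrow> 'd op \<Rightarrow> ('d \<times> 'd) op" where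
  "rho_st eta rho sigma =
     (let Y = state_s rho eta;
          J = (\<lambda>(m, s, et) (m', s', et'). Y (m, et) (m', et') * sigma s s');
          U3 = (\<lambda>(m, x) (m', x'). idm m m' * swapU x x');
          Z = conjU U3 J
      in (\<lambda>(m, s) (m', s'). \<Sum>et\<in>UNIV. Z (m, s, et) (m', s', et)))"

definition product_state :: "('a \<times> 'b) op \<Rightarrow> bool" where
  "product_state C \<longleftrightarrow> (\<exists>A B. C = tensor A B)"

end

theory Submission imports Defs begin
lemma cnj_if: "cnj (if P then (1::complex) else 0) = (if P then 1 else 0)" by simp
lemma mul_if: "(c::complex) * (if P then 1 else 0) = (if P then c else 0)" by simp

lemma conjU_perm:
  fixes U :: "('i::finite) op"
  assumes "\<And>x a. U x a = (if a = f x then 1 else 0)"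
  shows "conjU U C x y = C (f x) (f y)"
proof -
  have "conjU U C x y = (\<Sum>a\<in>UNIV. if a = f x then (\<Sum>b\<in>UNIV. if b = f y then C a b else 0) else 0)"
    unfolding conjU_def by (intro sum.cong refl) (auto simp: assms cnj_if mul_if intro!: sum.cong)
  also have "\<dots> = C (f x) (f y)"
    by simp
  finally show ?thesis .
qed

lemma swapU_perm: "swapU x a = (if a = (snd x, fst x) then 1 else 0)"
  by (cases x; cases a) (auto simp: swapU_def)

lemma U1_perm: "U1 x a = (if a = (fst (snd x), fst x, snd (snd x)) then 1 else 0)"
  by (cases x; cases a) (auto simp: U1_def swapU_def idm_def)

lemma U3_perm: "(\<lambda>(m, x) (m', x'). idm m m' * swapU x x') x a =
   (if a = (fst x, snd (snd x), fst (snd x)) then 1 else (0::complex))"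
  by (cases x; cases a) (auto simp: swapU_def idm_def)

lemma conjU_swap: "conjU swapU C (a,b) (a',b') = C (b,a) (b',a')"
  by (simp add: conjU_perm[OF swapU_perm])

lemma conjU_U1: "conjU U1 C (s,es,et) (s',es',et') = C (es,s,et) (es',s',et')"
  by (simp add: conjU_perm[OF U1_perm])

lemma conjU_U3: "conjU (\<lambda>(m, x) (m', x'). idm m m' * swapU x x') C (m,s,et) (m',s',et') = C (m,et,s) (m',et',s')"
  by (simp add: conjU_perm[OF U3_perm])

lemma tr1: "density A \<Longrightarrow> tr A = 1" by (simp add: density_def)

lemma state_s_eq:
  assumes "tr rho = 1"
  shows "state_s rho eta = eta"
proof (intro ext)
  fix p q :: "'a \<times> 'a"
  obtain s et where p: "p = (s, et)" by (cases p)
  obtain s' et' where q: "q = (s', et')" by (cases q)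
  have "state_s rho eta p q = (\<Sum>es\<in>UNIV. rho es es * eta (s, et) (s', et'))"
    unfolding p q state_s_def Let_def by (simp add: conjU_U1 tensor_def)
  also have "\<dots> = tr rho * eta (s, et) (s', et')"
    unfolding tr_def by (rule sum_distrib_right[symmetric])
  also have "\<dots> = eta p q" using assms p q by simp
  finally show "state_s rho eta p q = eta p q" .
qed

lemma tr_ptrace2: "tr (ptrace2 (eta :: ('a::finite \<times> 'b::finite) op)) = tr eta"
proof -
  have "tr (ptrace2 eta) = (\<Sum>i\<in>UNIV. \<Sum>b\<in>UNIV. eta (i, b) (i, b))"
    by (simp add: tr_def ptrace2_def)
  also have "\<dots> = (\<Sum>(i, b)\<in>UNIV \<times> UNIV. eta (i, b) (i, b))"
    by (rule sum.cartesian_product)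
  also have "\<dots> = tr eta" by (simp add: tr_def case_prod_beta')
  finally show ?thesis .
qed

theorem mainTheorem2:
  fixes eta :: "('d::finite \<times> 'd) op"
    and rho0 rho sigma :: "'d op"
  assumes "density eta" and "density rho0" and "density rho" and "density sigma"
  shows "Lam_tr eta rho = Lam_ts eta rho0 (Lam_sr eta rho)
         \<and> rho_st eta rho sigma = eta
         \<and> (\<not> product_state eta \<longrightarrow> \<not> product_state (rho_st eta rho sigma))"
proof -
  have r: "state_s rho eta = eta" by (rule state_s_eq[OF tr1[OF assms(3)]])
  have r0: "state_s rho0 eta = eta" by (rule state_s_eq[OF tr1[OF assms(2)]])
  have ts: "tr sigma = 1" by (rule tr1[OF assms(4)])
  have te: "tr eta = 1" by (rule tr1[OF assms(1)])
  have t1: "tr (ptrace2 eta) = 1" using te tr_ptrace2 by metis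
  have A: "Lam_tr eta rho = ptrace1 eta"
  proof (intro ext)
    fix a b
    show "Lam_tr eta rho a b = ptrace1 eta a b"
      unfolding Lam_tr_def r ptrace2_def ptrace1_def by (simp only: conjU_swap)
  qed
  have B: "Lam_ts eta rho0 (Lam_sr eta rho) = ptrace1 eta"
  proof (intro ext)
    fix a b
    have "Lam_ts eta rho0 (Lam_sr eta rho) a b = (\<Sum>c\<in>UNIV. ptrace2 eta c c * ptrace1 eta a b)"
      unfolding Lam_ts_def eta_s_def Lam_sr_def r r0 ptrace2_def[of "conjU _ _"]
      by (simp only: conjU_swap tensor_def prod.case)
    also have "\<dots> = tr (ptrace2 eta) * ptrace1 eta a b"
      unfolding tr_def by (rule sum_distrib_right[symmetric])
    finally show "Lam_ts eta rho0 (Lam_sr eta rho) a b = ptrace1 eta a b" using t1 by simp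
  qed
  have C: "rho_st eta rho sigma = eta"
  proof (intro ext)
    fix p q :: "'d \<times> 'd"
    obtain s et where p: "p = (s, et)" by (cases p)
    obtain s' et' where q: "q = (s', et')" by (cases q)
    have "rho_st eta rho sigma p q = (\<Sum>e\<in>UNIV. eta (s, et) (s', et') * sigma e e)"
      unfolding rho_st_def Let_def r p q
      by (simp only: conjU_U3 prod.case)
    also have "\<dots> = eta (s, et) (s', et') * tr sigma"
      unfolding tr_def by (rule sum_distrib_left[symmetric])
    also have "\<dots> = eta p q" using ts p q by simp
    finally show "rho_st eta rho sigma p q = eta p q" .
  qed
  show ?thesis using A B C by simp
qed
end
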